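(* Let $\mathfrak h=\mathfrak v\oplus\mathfrak z$ be a Lie algebra of type H with inner product $\langle\cdot,\cdot\rangle$ and maps $j_Z$. Let $Z_1\in\mathfrak z$ with $\|Z_1\|=1$, let $Z_2\in\mathfrak z$ be nonzero with $Z_2\perp Z_1$, and let $\mathfrak v=\mathfrak v_1\oplus\mathfrak v_2$ be an orthogonal decomposition into nonzero subspaces, each invariant under $j_{Z_1}$ and $j_{Z_2}$. For $r\in\mathbb R$ define $\tilde j:\mathfrak z\to\mathfrak{so}(\mathfrak v)$ by $\tilde j_{Z+\lambda Z_1}(V_1+V_2)=j_{Z+\lambda Z_1}(V_1+V_2)+(r-1)\lambda\, j_{Z_1}V_2$ for $Z\perp Z_1$, $\lambda\in\mathbb R$, $V_i\in\mathfrak v_i$, and let $\mathfrak n_r$ be the vector space $\mathfrak v\oplus\mathfrak z$ with the 2-step nilpotent Lie bracket defined by $\mathfrak z$ central, $[\mathfrak v,\mathfrak v]\subseteq\mathfrak z$ and $\langle Z,[V,W]\rangle=\langle\tilde j_ZV,W\rangle$ for $Z\in\mathfrak z$, $V,W\in\mathfrak v$. Then for every $r>0$ the Lie algebra $\mathfrak n_r$ is non-singular, and if moreover $r\neq1$ then $\mathfrak n_r$ is not isomorphic to any Lie algebra of type H.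
   Context: A metric 2-step nilpotent real Lie algebra $\mathfrak n$ with center $\mathfrak z$ and $\mathfrak v=\mathfrak z^\perp$ has maps $j_Z:\mathfrak v\to\mathfrak v$ ($Z\in\mathfrak z$) given by $\langle j_ZV,W\rangle=\langle Z,[V,W]\rangle$; it is of type H if $j_Z^2=-\langle Z,Z\rangle\mathrm{Id}$ for all $Z\in\mathfrak z$. A 2-step nilpotent Lie algebra is non-singular if $\mathrm{ad}(X):\mathfrak n\to\mathfrak z$ is onto for every $X\notin\mathfrak z$ (equivalently, $\tilde j_Z$ is invertible for every nonzero $Z$). *)

theory Defs
  imports "HOL-Analysis.Analysis"
begin

definition lie_algebra :: "('a::real_vector \<Rightarrow> 'a \<Rightarrow> 'a) \<Rightarrow> bool" where
  "lie_algebra br \<longleftrightarrow> bilinear br \<and> (\<forall>x y. br x y = - br y x)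
     \<and> (\<forall>x y w. br x (br y w) + br y (br w x) + br w (br x y) = 0)"

definition lie_center :: "('a::real_vector \<Rightarrow> 'a \<Rightarrow> 'a) \<Rightarrow> 'a set" where
  "lie_center br = {x. \<forall>y. br x y = 0}"

definition two_step_nilpotent :: "('a::real_vector \<Rightarrow> 'a \<Rightarrow> 'a) \<Rightarrow> bool" where
  "two_step_nilpotent br \<longleftrightarrow> lie_algebra br \<and> (\<forall>x y w. br (br x y) w = 0)
     \<and> (\<exists>x y. br x y \<noteq> 0)"

definition nonsingular :: "('a::real_vector \<Rightarrow> 'a \<Rightarrow> 'a) \<Rightarrow> bool" where
  "nonsingular br \<longleftrightarrow> two_step_nilpotent br \<and>
     (\<forall>X. X \<notin> lie_center br \<longrightarrow> (\<forall>Z \<in> lie_center br. \<exists>Y. br X Y = Z))"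

text \<open>Metric setting: the inner product is the one of the euclidean space type;
  v is the orthogonal complement of the center z.\<close>
definition vpart :: "('a::euclidean_space \<Rightarrow> 'a \<Rightarrow> 'a) \<Rightarrow> 'a set" where
  "vpart br = orthogonal_comp (lie_center br)"

definition jmap :: "('a::euclidean_space \<Rightarrow> 'a \<Rightarrow> 'a) \<Rightarrow> 'a \<Rightarrow> 'a \<Rightarrow> 'a" where
  "jmap br Z V = (THE U. U \<in> vpart br \<and> (\<forall>W \<in> vpart br. U \<bullet> W = Z \<bullet> br V W))"

definition type_H :: "('a::euclidean_space \<Rightarrow> 'a \<Rightarrow> 'a) \<Rightarrow> bool" where
  "type_H br \<longleftrightarrow> two_step_nilpotent br \<and>
     (\<forall>Z \<in> lie_center br. \<forall>V \<in> vpart br. jmap br Z (jmap br Z V) = - (Z \<bullet> Z) *\<^sub>R V)"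

definition lie_iso :: "('a::real_vector \<Rightarrow> 'b::real_vector) \<Rightarrow> ('a \<Rightarrow> 'a \<Rightarrow> 'a) \<Rightarrow> ('b \<Rightarrow> 'b \<Rightarrow> 'b) \<Rightarrow> bool" where
  "lie_iso f br1 br2 \<longleftrightarrow> linear f \<and> bij f \<and> (\<forall>x y. f (br1 x y) = br2 (f x) (f y))"

end

theory Submission imports Defs begin

lemma center_subspace:
  fixes br :: "'a::euclidean_space \<Rightarrow> 'a \<Rightarrow> 'a"
  assumes B: "bilinear br"
  shows "subspace (lie_center br)"
  unfolding subspace_def lie_center_def
  using bilinear_lzero[OF B] bilinear_ladd[OF B] bilinear_lmul[OF B] by auto

lemma vpart_subspace: "subspace (vpart br)"
  unfolding vpart_def by (rule subspace_orthogonal_comp)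

lemma vpart_center_zero:
  assumes "x \<in> vpart br" "x \<in> lie_center br" shows "x = 0"
  using assms unfolding vpart_def orthogonal_comp_def orthogonal_def by auto

lemma vpart_center_orth:
  assumes "x \<in> vpart br" "c \<in> lie_center br" shows "x \<bullet> c = 0" "c \<bullet> x = 0"
  using assms unfolding vpart_def orthogonal_comp_def orthogonal_def by (auto simp: inner_commute)

lemma decomp:
  fixes br :: "'a::euclidean_space \<Rightarrow> 'a \<Rightarrow> 'a"
  assumes B: "bilinear br"
  obtains c where "c \<in> lie_center br" "x - c \<in> vpart br"
proof -
  obtain y z where y: "y \<in> span (lie_center br)" and z: "\<And>w. w \<in> span (lie_center br) \<Longrightarrow> orthogonal z w"
    and x: "x = y + z"
    using orthogonal_subspace_decomp_exists[of "lie_center br" x] by blast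
  have sp: "span (lie_center br) = lie_center br" using center_subspace[OF B] by simp
  have "y \<in> lie_center br" using y sp by simp
  moreover have "x - y \<in> vpart br"
    using z sp x unfolding vpart_def orthogonal_comp_def by (auto simp: orthogonal_commute)
  ultimately show thesis using that by blast
qed

lemma center_right:
  assumes "\<forall>x y. br x y = - br y x" "c \<in> lie_center br"
  shows "br x c = 0" "br c x = 0"
proof -
  show 2: "br c x = 0" using assms(2) unfolding lie_center_def by blast
  show "br x c = 0" using assms(1) 2 by (metis minus_zero)
qed

lemma jmap_unique:
  fixes br :: "'a::euclidean_space \<Rightarrow> 'a \<Rightarrow> 'a"
  assumes "U \<in> vpart br" "\<forall>W\<in>vpart br. U \<bullet> W = Z \<bullet> br V W"
  shows "jmap br Z V = U"
  unfolding jmap_def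
proof (rule the_equality)
  show "U \<in> vpart br \<and> (\<forall>W\<in>vpart br. U \<bullet> W = Z \<bullet> br V W)" using assms by blast
next
  fix U' assume h: "U' \<in> vpart br \<and> (\<forall>W\<in>vpart br. U' \<bullet> W = Z \<bullet> br V W)"
  have d: "U' - U \<in> vpart br" using h assms(1) vpart_subspace subspace_diff by blast
  have "(U' - U) \<bullet> (U' - U) = 0"
    using h assms d by (simp add: inner_diff_left)
  then show "U' = U" by simp
qed

lemma jmap_works:
  fixes br :: "'a::euclidean_space \<Rightarrow> 'a \<Rightarrow> 'a"
  assumes B: "bilinear br"
  shows "jmap br Z V \<in> vpart br" "\<And>W. W \<in> vpart br \<Longrightarrow> jmap br Z V \<bullet> W = Z \<bullet> br V W"
proof -
  have lin: "linear (br V)" using B unfolding bilinear_def by blast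
  define Y where "Y = adjoint (br V) Z"
  have Y: "W \<bullet> Y = br V W \<bullet> Z" for W unfolding Y_def using adjoint_works[OF lin] by blast
  obtain c where c: "c \<in> lie_center br" "Y - c \<in> vpart br" using decomp[OF B] by blast
  have U: "\<forall>W\<in>vpart br. (Y - c) \<bullet> W = Z \<bullet> br V W"
  proof
    fix W assume W: "W \<in> vpart br"
    have "c \<bullet> W = 0" using vpart_center_orth(2)[OF W c(1)] .
    then show "(Y - c) \<bullet> W = Z \<bullet> br V W" using Y[of W] by (simp add: inner_diff_left inner_diff_right inner_commute)
  qed
  have "jmap br Z V = Y - c" by (rule jmap_unique[OF c(2) U])
  then show "jmap br Z V \<in> vpart br" "\<And>W. W \<in> vpart br \<Longrightarrow> jmap br Z V \<bullet> W = Z \<bullet> br V W"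
    using c U by auto
qed

lemma jmap_addZ:
  fixes br :: "'a::euclidean_space \<Rightarrow> 'a \<Rightarrow> 'a"
  assumes B: "bilinear br"
  shows "jmap br (a + b) V = jmap br a V + jmap br b V"
  apply (rule jmap_unique)
  using jmap_works[OF B] vpart_subspace[of br] subspace_add[of "vpart br"]
   by (auto simp: inner_add_left)

lemma jmap_scaleZ:
  fixes br :: "'a::euclidean_space \<Rightarrow> 'a \<Rightarrow> 'a"
  assumes B: "bilinear br"
  shows "jmap br (k *\<^sub>R a) V = k *\<^sub>R jmap br a V"
  apply (rule jmap_unique)
  using jmap_works[OF B] vpart_subspace[of br] subspace_scale[of "vpart br"]
   by (auto simp: inner_scaleR_left)

lemma jmap_addV:
  fixes br :: "'a::euclidean_space \<Rightarrow> 'a \<Rightarrow> 'a"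
  assumes B: "bilinear br"
  shows "jmap br Z (V + V') = jmap br Z V + jmap br Z V'"
  apply (rule jmap_unique)
  using jmap_works[OF B] vpart_subspace[of br] subspace_add[of "vpart br"] bilinear_ladd[OF B]
   by (auto simp: inner_add_left inner_add_right)

lemma jmap_scaleV:
  fixes br :: "'a::euclidean_space \<Rightarrow> 'a \<Rightarrow> 'a"
  assumes B: "bilinear br"
  shows "jmap br Z (k *\<^sub>R V) = k *\<^sub>R jmap br Z V"
  apply (rule jmap_unique)
  using jmap_works[OF B] vpart_subspace[of br] subspace_scale[of "vpart br"] bilinear_lmul[OF B]
   by (auto simp: inner_scaleR_left inner_scaleR_right)

lemma jmap_negV:
  fixes br :: "'a::euclidean_space \<Rightarrow> 'a \<Rightarrow> 'a"
  assumes B: "bilinear br"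
  shows "jmap br Z (- V) = - jmap br Z V"
  using jmap_scaleV[OF B, of Z "-1" V] by simp

lemma jmap_diffV:
  fixes br :: "'a::euclidean_space \<Rightarrow> 'a \<Rightarrow> 'a"
  assumes B: "bilinear br"
  shows "jmap br Z (V - V') = jmap br Z V - jmap br Z V'"
  using jmap_addV[OF B, of Z V "- V'"] jmap_negV[OF B] by simp

lemma jmap_zeroV:
  fixes br :: "'a::euclidean_space \<Rightarrow> 'a \<Rightarrow> 'a"
  assumes B: "bilinear br"
  shows "jmap br Z 0 = 0"
  using jmap_scaleV[OF B, of Z 0 0] by simp

lemma jmap_center:
  fixes br :: "'a::euclidean_space \<Rightarrow> 'a \<Rightarrow> 'a"
  assumes B: "bilinear br" and c: "c \<in> lie_center br"
  shows "jmap br Z (V + c) = jmap br Z V"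
proof -
  have "br c W = 0" for W using c unfolding lie_center_def by blast
  then show ?thesis
    apply (intro jmap_unique)
    using jmap_works[OF B] bilinear_ladd[OF B] by auto
qed

lemma typeH_mod:
  fixes br :: "'a::euclidean_space \<Rightarrow> 'a \<Rightarrow> 'a"
  assumes H: "type_H br" and Z: "Z \<in> lie_center br"
  shows "jmap br Z (jmap br Z V) + (Z \<bullet> Z) *\<^sub>R V \<in> lie_center br"
proof -
  have B: "bilinear br" using H unfolding type_H_def two_step_nilpotent_def lie_algebra_def by blast
  obtain c where c: "c \<in> lie_center br" "V - c \<in> vpart br" using decomp[OF B] by blast
  have "jmap br Z V = jmap br Z (V - c)" using jmap_center[OF B c(1), of Z "V - c"] by simp
  moreover have "jmap br Z (jmap br Z (V - c)) = - (Z \<bullet> Z) *\<^sub>R (V - c)"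
    using H Z c unfolding type_H_def by blast
  ultimately have "jmap br Z (jmap br Z V) + (Z \<bullet> Z) *\<^sub>R V = (Z \<bullet> Z) *\<^sub>R c"
    by (simp add: algebra_simps)
  moreover have "(Z \<bullet> Z) *\<^sub>R c \<in> lie_center br" by (rule subspace_scale[OF center_subspace[OF B] c(1)])
  ultimately show ?thesis by simp
qed

lemma typeH_anti_mod:
  fixes br :: "'a::euclidean_space \<Rightarrow> 'a \<Rightarrow> 'a"
  assumes H: "type_H br" and a: "a \<in> lie_center br" and b: "b \<in> lie_center br"
  shows "jmap br a (jmap br b V) + jmap br b (jmap br a V) + (2 * (a \<bullet> b)) *\<^sub>R V \<in> lie_center br"
proof -
  have B: "bilinear br" using H unfolding type_H_def two_step_nilpotent_def lie_algebra_def by blast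
  have S: "subspace (lie_center br)" by (rule center_subspace[OF B])
  have ab: "a + b \<in> lie_center br" using a b S subspace_add by blast
  have 1: "jmap br (a+b) (jmap br (a+b) V) + ((a+b) \<bullet> (a+b)) *\<^sub>R V \<in> lie_center br"
    by (rule typeH_mod[OF H ab])
  have 2: "jmap br a (jmap br a V) + (a \<bullet> a) *\<^sub>R V \<in> lie_center br" by (rule typeH_mod[OF H a])
  have 3: "jmap br b (jmap br b V) + (b \<bullet> b) *\<^sub>R V \<in> lie_center br" by (rule typeH_mod[OF H b])
  have eq: "jmap br (a+b) (jmap br (a+b) V) + ((a+b) \<bullet> (a+b)) *\<^sub>R V
     - (jmap br a (jmap br a V) + (a \<bullet> a) *\<^sub>R V) - (jmap br b (jmap br b V) + (b \<bullet> b) *\<^sub>R V)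
     = jmap br a (jmap br b V) + jmap br b (jmap br a V) + (2 * (a \<bullet> b)) *\<^sub>R V"
  proof -
    have e1: "jmap br (a+b) (jmap br (a+b) V) = jmap br a (jmap br a V) + jmap br a (jmap br b V) + (jmap br b (jmap br a V) + jmap br b (jmap br b V))"
      by (simp add: jmap_addZ[OF B] jmap_addV[OF B])
    have e2a: "(a+b) \<bullet> (a+b) = a \<bullet> a + 2 * (a \<bullet> b) + b \<bullet> b"
      by (simp add: inner_add_left inner_add_right inner_commute[of b a])
    have e2: "((a+b) \<bullet> (a+b)) *\<^sub>R V = (a \<bullet> a) *\<^sub>R V + (2 * (a \<bullet> b)) *\<^sub>R V + (b \<bullet> b) *\<^sub>R V"
      unfolding e2a by (simp only: scaleR_add_left)
    show ?thesis unfolding e1 e2 by (simp add: algebra_simps)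
  qed
  have "jmap br (a+b) (jmap br (a+b) V) + ((a+b) \<bullet> (a+b)) *\<^sub>R V
     - (jmap br a (jmap br a V) + (a \<bullet> a) *\<^sub>R V) - (jmap br b (jmap br b V) + (b \<bullet> b) *\<^sub>R V) \<in> lie_center br"
    by (intro subspace_diff[OF S] 1 2 3)
  then show ?thesis unfolding eq .
qed

theorem mainTheorem9:
  fixes brH :: "'h::euclidean_space \<Rightarrow> 'h \<Rightarrow> 'h"
    and brr :: "'h \<Rightarrow> 'h \<Rightarrow> 'h"
    and Z1 Z2 :: 'h and v1 v2 :: "'h set" and r :: real
  assumes typeH: "type_H brH"
    and Z1: "Z1 \<in> lie_center brH" "norm Z1 = 1"
    and Z2: "Z2 \<in> lie_center brH" "Z2 \<noteq> 0" "Z2 \<bullet> Z1 = 0"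
    and v1: "subspace v1" "v1 \<subseteq> vpart brH" "v1 \<noteq> {0}"
    and v2: "subspace v2" "v2 \<subseteq> vpart brH" "v2 \<noteq> {0}"
    and orth: "\<forall>x\<in>v1. \<forall>y\<in>v2. x \<bullet> y = 0"
    and sum: "vpart brH = {x + y |x y. x \<in> v1 \<and> y \<in> v2}"
    and inv1: "\<forall>V\<in>v1. jmap brH Z1 V \<in> v1 \<and> jmap brH Z2 V \<in> v1"
    and inv2: "\<forall>V\<in>v2. jmap brH Z1 V \<in> v2 \<and> jmap brH Z2 V \<in> v2"
    and brr_bilinear: "bilinear brr"
    and brr_central: "\<forall>Z\<in>lie_center brH. \<forall>Y. brr Z Y = 0 \<and> brr Y Z = 0"
    and brr_vv: "\<forall>V\<in>vpart brH. \<forall>W\<in>vpart brH. brr V W \<in> lie_center brH"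
    and brr_def: "\<forall>Z\<in>lie_center brH. Z \<bullet> Z1 = 0 \<longrightarrow> (\<forall>lam::real. \<forall>V1\<in>v1. \<forall>V2\<in>v2. \<forall>W\<in>vpart brH.
        (Z + lam *\<^sub>R Z1) \<bullet> brr (V1 + V2) W =
        (jmap brH (Z + lam *\<^sub>R Z1) (V1 + V2) + ((r - 1) * lam) *\<^sub>R jmap brH Z1 V2) \<bullet> W)"
    and r: "r > 0"
  shows "nonsingular brr \<and>
    (r \<noteq> 1 \<longrightarrow> (\<forall>brH' :: 'b::euclidean_space \<Rightarrow> 'b \<Rightarrow> 'b.
        type_H brH' \<longrightarrow> \<not> (\<exists>f. lie_iso f brr brH')))"
proof -
  have HB: "bilinear brH" and HS: "\<forall>x y. brH x y = - brH y x"
    using typeH unfolding type_H_def two_step_nilpotent_def lie_algebra_def by blast+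
  have zS: "subspace (lie_center brH)" by (rule center_subspace[OF HB])
  have vS: "subspace (vpart brH)" by (rule vpart_subspace)
  have jv: "\<And>Z V. jmap brH Z V \<in> vpart brH" using jmap_works[OF HB] by blast
  have jin: "\<And>Z V W. W \<in> vpart brH \<Longrightarrow> jmap brH Z V \<bullet> W = Z \<bullet> brH V W"
    using jmap_works[OF HB] by blast
  have jj: "\<And>Z V. Z \<in> lie_center brH \<Longrightarrow> V \<in> vpart brH \<Longrightarrow> jmap brH Z (jmap brH Z V) = - (Z \<bullet> Z) *\<^sub>R V"
    using typeH unfolding type_H_def by blast
  have skew: "\<And>Z V W. V \<in> vpart brH \<Longrightarrow> W \<in> vpart brH \<Longrightarrow> jmap brH Z V \<bullet> W = - (jmap brH Z W \<bullet> V)"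
  proof -
    fix Z V W assume V: "V \<in> vpart brH" and W: "W \<in> vpart brH"
    have "brH V W = - brH W V" using HS by blast
    then show "jmap brH Z V \<bullet> W = - (jmap brH Z W \<bullet> V)" using jin[OF W, of Z V] jin[OF V, of Z W] by simp
  qed
  have anti: "\<And>a b V. a \<in> lie_center brH \<Longrightarrow> b \<in> lie_center brH \<Longrightarrow> a \<bullet> b = 0 \<Longrightarrow> V \<in> vpart brH \<Longrightarrow>
      jmap brH a (jmap brH b V) = - jmap brH b (jmap brH a V)"
  proof -
    fix a b V assume a: "a \<in> lie_center brH" and b: "b \<in> lie_center brH" and ab: "a \<bullet> b = 0" and V: "V \<in> vpart brH"
    have 1: "jmap brH a (jmap brH b V) + jmap brH b (jmap brH a V) \<in> lie_center brH"
      using typeH_anti_mod[OF typeH a b, of V] ab by simp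
    have 2: "jmap brH a (jmap brH b V) + jmap brH b (jmap brH a V) \<in> vpart brH"
      using jv vS subspace_add by blast
    show "jmap brH a (jmap brH b V) = - jmap brH b (jmap brH a V)"
      using vpart_center_zero[OF 2 1] by (simp add: add_eq_0_iff2)
  qed
  have jpol: "\<And>a U V. a \<in> lie_center brH \<Longrightarrow> U \<in> vpart brH \<Longrightarrow> V \<in> vpart brH \<Longrightarrow>
      jmap brH a U \<bullet> jmap brH a V = (a \<bullet> a) * (U \<bullet> V)"
  proof -
    fix a U V assume a: "a \<in> lie_center brH" and U: "U \<in> vpart brH" and V: "V \<in> vpart brH"
    have "jmap brH a U \<bullet> jmap brH a V = - (jmap brH a (jmap brH a V) \<bullet> U)" using skew[OF U jv] .
    also have "\<dots> = (a \<bullet> a) * (U \<bullet> V)" using jj[OF a V] by (simp add: inner_commute)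
    finally show "jmap brH a U \<bullet> jmap brH a V = (a \<bullet> a) * (U \<bullet> V)" .
  qed
  have cross: "\<And>a b V. a \<in> lie_center brH \<Longrightarrow> b \<in> lie_center brH \<Longrightarrow> a \<bullet> b = 0 \<Longrightarrow> V \<in> vpart brH \<Longrightarrow>
      jmap brH a V \<bullet> jmap brH b V = 0"
  proof -
    fix a b V assume a: "a \<in> lie_center brH" and b: "b \<in> lie_center brH" and ab: "a \<bullet> b = 0" and V: "V \<in> vpart brH"
    have "jmap brH a V \<bullet> jmap brH b V = - (jmap brH a (jmap brH b V) \<bullet> V)" using skew[OF V jv] .
    also have "\<dots> = jmap brH b (jmap brH a V) \<bullet> V" using anti[OF a b ab V] by simp
    also have "\<dots> = - (jmap brH b V \<bullet> jmap brH a V)" using skew[OF jv V] .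
    finally show "jmap brH a V \<bullet> jmap brH b V = 0" by (simp add: inner_commute)
  qed
  have Z11: "Z1 \<bullet> Z1 = 1" using Z1(2) by (metis norm_eq_sqrt_inner real_sqrt_eq_1_iff)
  have v1v: "\<And>x. x \<in> v1 \<Longrightarrow> x \<in> vpart brH" using v1(2) by blast
  have v2v: "\<And>x. x \<in> v2 \<Longrightarrow> x \<in> vpart brH" using v2(2) by blast
  have orth': "\<And>x y. x \<in> v1 \<Longrightarrow> y \<in> v2 \<Longrightarrow> y \<bullet> x = 0" using orth by (simp add: inner_commute)
  have vdec: "\<And>V. V \<in> vpart brH \<Longrightarrow> \<exists>V1\<in>v1. \<exists>V2\<in>v2. V = V1 + V2" using sum by blast
  have F: "\<And>Z V1 V2 W. Z \<in> lie_center brH \<Longrightarrow> V1 \<in> v1 \<Longrightarrow> V2 \<in> v2 \<Longrightarrow> W \<in> vpart brH \<Longrightarrow>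
     Z \<bullet> brr (V1 + V2) W = (jmap brH Z (V1 + V2) + ((r - 1) * (Z \<bullet> Z1)) *\<^sub>R jmap brH Z1 V2) \<bullet> W"
  proof -
    fix Z V1 V2 W assume Z: "Z \<in> lie_center brH" and V1: "V1 \<in> v1" and V2: "V2 \<in> v2" and W: "W \<in> vpart brH"
    define Z' where "Z' = Z - (Z \<bullet> Z1) *\<^sub>R Z1"
    have Z'c: "Z' \<in> lie_center brH" unfolding Z'_def using Z Z1(1) zS subspace_diff subspace_scale by blast
    have Z'o: "Z' \<bullet> Z1 = 0" unfolding Z'_def using Z11 by (simp add: inner_diff_left)
    have e: "Z' + (Z \<bullet> Z1) *\<^sub>R Z1 = Z" unfolding Z'_def by simp
    have "(Z' + (Z \<bullet> Z1) *\<^sub>R Z1) \<bullet> brr (V1 + V2) W = (jmap brH (Z' + (Z \<bullet> Z1) *\<^sub>R Z1) (V1 + V2) + ((r - 1) * (Z \<bullet> Z1)) *\<^sub>R jmap brH Z1 V2) \<bullet> W"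
      using brr_def Z'c Z'o V1 V2 W by blast
    then show "Z \<bullet> brr (V1 + V2) W = (jmap brH Z (V1 + V2) + ((r - 1) * (Z \<bullet> Z1)) *\<^sub>R jmap brH Z1 V2) \<bullet> W"
      unfolding e .
  qed
  have bcl: "\<And>x y c. c \<in> lie_center brH \<Longrightarrow> brr (x + c) y = brr x y"
    using brr_central bilinear_ladd[OF brr_bilinear] by simp
  have bcr: "\<And>x y c. c \<in> lie_center brH \<Longrightarrow> brr x (y + c) = brr x y"
    using brr_central bilinear_radd[OF brr_bilinear] by simp
  have bin: "\<And>x y. brr x y \<in> lie_center brH"
  proof -
    fix x y
    obtain cx where cx: "cx \<in> lie_center brH" "x - cx \<in> vpart brH" using decomp[OF HB] by blast
    obtain cy where cy: "cy \<in> lie_center brH" "y - cy \<in> vpart brH" using decomp[OF HB] by blast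
    have "brr x y = brr (x - cx) (y - cy)"
      using bcl[OF cx(1), of "x - cx" y] bcr[OF cy(1), of "x - cx" "y - cy"] by simp
    then show "brr x y \<in> lie_center brH" using brr_vv cx cy by simp
  qed
  have lin_j1: "\<And>V1 V2. jmap brH Z1 (V1 + V2) + (r - 1) *\<^sub>R jmap brH Z1 V2 = jmap brH Z1 (V1 + r *\<^sub>R V2)"
    by (simp add: jmap_addV[OF HB] jmap_scaleV[OF HB] algebra_simps)
  have Upos: "\<And>V1 V2. V1 \<in> v1 \<Longrightarrow> V2 \<in> v2 \<Longrightarrow> (V1 + r *\<^sub>R V2) \<bullet> (V1 + V2) = V1 \<bullet> V1 + r * (V2 \<bullet> V2)"
    using orth orth' by (simp add: inner_add_left inner_add_right)
  have Uzero: "\<And>V1 V2. V1 \<in> v1 \<Longrightarrow> V2 \<in> v2 \<Longrightarrow> V1 \<bullet> V1 + r * (V2 \<bullet> V2) = 0 \<Longrightarrow> V1 + V2 = 0"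
  proof -
    fix V1 V2 assume "V1 \<in> v1" "V2 \<in> v2" "V1 \<bullet> V1 + r * (V2 \<bullet> V2) = 0"
    moreover have "V1 \<bullet> V1 \<ge> 0" "V2 \<bullet> V2 \<ge> 0" by simp_all
    ultimately have "V1 \<bullet> V1 = 0" "r * (V2 \<bullet> V2) = 0" using r
      by (smt (verit) mult_nonneg_nonneg)+
    then show "V1 + V2 = 0" using r by simp
  qed
  have ceq: "lie_center brr = lie_center brH"
  proof
    show "lie_center brH \<subseteq> lie_center brr" using brr_central unfolding lie_center_def by blast
  next
    show "lie_center brr \<subseteq> lie_center brH"
    proof
      fix x assume x: "x \<in> lie_center brr"
      obtain c where c: "c \<in> lie_center brH" "x - c \<in> vpart brH" using decomp[OF HB] by blast
      obtain V1 V2 where V1: "V1 \<in> v1" and V2: "V2 \<in> v2" and VV: "x - c = V1 + V2" using vdec[OF c(2)] by blast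
      have bz: "brr (V1 + V2) y = 0" for y
        using bcl[OF c(1), of "x - c" y] x unfolding VV[symmetric] lie_center_def by simp
      define U where "U = V1 + r *\<^sub>R V2"
      have "0 = Z1 \<bullet> brr (V1 + V2) (jmap brH Z1 U)" using bz by simp
      also have "\<dots> = jmap brH Z1 U \<bullet> jmap brH Z1 U"
        using F[OF Z1(1) V1 V2 jv, of Z1 U] Z11 lin_j1 unfolding U_def by simp
      also have "\<dots> = U \<bullet> U" using jpol[OF Z1(1)] Z11 v1v v2v V1 V2 vS unfolding U_def
        by (simp add: subspace_add subspace_scale)
      finally have "U = 0" by simp
      then have "U \<bullet> (V1 + V2) = 0" by simp
      then have "V1 + V2 = 0" using Upos[OF V1 V2] Uzero[OF V1 V2] unfolding U_def by simp
      then show "x \<in> lie_center brH" using VV c(1) by simp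
    qed
  qed
  have bskew: "\<And>x y. brr x y = - brr y x"
  proof -
    fix x y
    obtain cx where cx: "cx \<in> lie_center brH" "x - cx \<in> vpart brH" using decomp[OF HB] by blast
    obtain cy where cy: "cy \<in> lie_center brH" "y - cy \<in> vpart brH" using decomp[OF HB] by blast
    obtain V1 V2 where V1: "V1 \<in> v1" and V2: "V2 \<in> v2" and VV: "x - cx = V1 + V2" using vdec[OF cx(2)] by blast
    obtain W1 W2 where W1: "W1 \<in> v1" and W2: "W2 \<in> v2" and WW: "y - cy = W1 + W2" using vdec[OF cy(2)] by blast
    have ex: "brr x y = brr (V1 + V2) (W1 + W2)"
    proof -
      have "brr x y = brr (x - cx) (y - cy)"
        using bcl[OF cx(1), of "x - cx" y] bcr[OF cy(1), of "x - cx" "y - cy"] by simp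
      then show ?thesis using VV WW by simp
    qed
    have ey: "brr y x = brr (W1 + W2) (V1 + V2)"
    proof -
      have "brr y x = brr (y - cy) (x - cx)"
        using bcl[OF cy(1), of "y - cy" x] bcr[OF cx(1), of "y - cy" "x - cx"] by simp
      then show ?thesis using VV WW by simp
    qed
    define d where "d = brr (V1 + V2) (W1 + W2) + brr (W1 + W2) (V1 + V2)"
    have dz: "d \<in> lie_center brH" unfolding d_def using bin zS subspace_add by blast
    have Vv: "V1 + V2 \<in> vpart brH" and Wv: "W1 + W2 \<in> vpart brH"
      using V1 V2 W1 W2 v1v v2v vS subspace_add by blast+
    have j2V: "jmap brH Z1 V2 \<in> v2" and j2W: "jmap brH Z1 W2 \<in> v2" using inv2 V2 W2 by blast+
    have a1: "jmap brH Z1 V2 \<bullet> (W1 + W2) = jmap brH Z1 V2 \<bullet> W2"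
      using orth'[OF W1 j2V] by (simp add: inner_add_right)
    have a2: "jmap brH Z1 W2 \<bullet> (V1 + V2) = jmap brH Z1 W2 \<bullet> V2"
      using orth'[OF V1 j2W] by (simp add: inner_add_right)
    have a3: "jmap brH Z1 V2 \<bullet> W2 = - (jmap brH Z1 W2 \<bullet> V2)" using skew v2v V2 W2 by blast
    have "\<forall>Z\<in>lie_center brH. Z \<bullet> d = 0"
    proof
      fix Z assume Z: "Z \<in> lie_center brH"
      have "Z \<bullet> d = Z \<bullet> brr (V1 + V2) (W1 + W2) + Z \<bullet> brr (W1 + W2) (V1 + V2)"
        unfolding d_def by (simp add: inner_add_right)
      also have "\<dots> = 0"
        unfolding F[OF Z V1 V2 Wv] F[OF Z W1 W2 Vv] inner_add_left inner_scaleR_left a1 a2 a3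
        using skew[OF Vv Wv, of Z] by simp
      finally show "Z \<bullet> d = 0" .
    qed
    then have "d \<bullet> d = 0" using dz by blast
    then have "d = 0" by simp
    then show "brr x y = - brr y x" unfolding ex ey d_def by (simp add: add_eq_0_iff2)
  qed
  obtain V0 where V0: "V0 \<in> v1" "V0 \<noteq> 0" using v1(3) subspace_0[OF v1(1)] by blast
  have nz: "brr V0 (jmap brH Z1 V0) \<noteq> 0"
  proof
    assume h: "brr V0 (jmap brH Z1 V0) = 0"
    have "Z1 \<bullet> brr (V0 + 0) (jmap brH Z1 V0) = (jmap brH Z1 (V0 + 0) + ((r - 1) * (Z1 \<bullet> Z1)) *\<^sub>R jmap brH Z1 0) \<bullet> jmap brH Z1 V0"
      using F[OF Z1(1) V0(1) subspace_0[OF v2(1)] jv] by blast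
    then have "jmap brH Z1 V0 \<bullet> jmap brH Z1 V0 = 0" using h by (simp add: jmap_zeroV[OF HB])
    then have "V0 \<bullet> V0 = 0" using jpol[OF Z1(1) v1v[OF V0(1)] v1v[OF V0(1)]] Z11 by simp
    then show False using V0(2) by simp
  qed
  have tsn: "two_step_nilpotent brr"
    unfolding two_step_nilpotent_def lie_algebra_def
  proof (intro conjI allI)
    show "bilinear brr" by (rule brr_bilinear)
    show "brr x y = - brr y x" for x y by (rule bskew)
    show "brr x (brr y w) + brr y (brr w x) + brr w (brr x y) = 0" for x y w
      using brr_central bin by simp
    show "brr (brr x y) w = 0" for x y w using brr_central bin by simp
    show "\<exists>x y. brr x y \<noteq> 0" using nz by blast
  qed
  have ns: "nonsingular brr"
    unfolding nonsingular_def
  proof (intro conjI tsn allI impI ballI)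
    fix X Z assume X: "X \<notin> lie_center brr" and Z: "Z \<in> lie_center brr"
    have Zc: "Z \<in> lie_center brH" using Z ceq by simp
    obtain c where c: "c \<in> lie_center brH" "X - c \<in> vpart brH" using decomp[OF HB] by blast
    obtain V1 V2 where V1: "V1 \<in> v1" and V2: "V2 \<in> v2" and VV: "X - c = V1 + V2" using vdec[OF c(2)] by blast
    have V: "V1 + V2 \<in> vpart brH" using VV c by simp
    have Vnz: "V1 + V2 \<noteq> 0"
    proof
      assume "V1 + V2 = 0"
      then have "X = c" using VV by simp
      then show False using X c ceq by simp
    qed
    have linV: "linear (brr (V1 + V2))" using brr_bilinear unfolding bilinear_def by blast
    define S where "S = range (brr (V1 + V2))"
    have SS: "subspace S" unfolding S_def using linear_subspace_image[OF linV subspace_UNIV] .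
    obtain s t where s: "s \<in> span S" and t: "\<And>w. w \<in> span S \<Longrightarrow> orthogonal t w" and st: "Z = s + t"
      using orthogonal_subspace_decomp_exists[of S Z] by blast
    have sS: "s \<in> S" using s SS by (metis span_eq_iff)
    then obtain Y0 where Y0: "s = brr (V1 + V2) Y0" unfolding S_def by blast
    have tc: "t \<in> lie_center brH"
    proof -
      have "t = Z - s" using st by simp
      moreover have "s \<in> lie_center brH" using bin Y0 by simp
      ultimately show ?thesis using subspace_diff[OF zS Zc] by simp
    qed
    have tort: "t \<bullet> brr (V1 + V2) W = 0" for W
      using t[of "brr (V1 + V2) W"] SS unfolding S_def orthogonal_def by (simp add: span_base)
    define lam where "lam = t \<bullet> Z1"
    define t' where "t' = t - lam *\<^sub>R Z1"
    have t'c: "t' \<in> lie_center brH" unfolding t'_def using tc Z1(1) zS subspace_diff subspace_scale by blast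
    have t'o: "t' \<bullet> Z1 = 0" unfolding t'_def lam_def using Z11 by (simp add: inner_diff_left)
    have tt: "t = t' + lam *\<^sub>R Z1" unfolding t'_def by simp
    define E where "E = jmap brH t (V1 + V2) + ((r - 1) * lam) *\<^sub>R jmap brH Z1 V2"
    have Ev: "E \<in> vpart brH" unfolding E_def using jv vS subspace_add subspace_scale by blast
    have "E \<bullet> E = t \<bullet> brr (V1 + V2) E" using F[OF tc V1 V2 Ev] unfolding E_def lam_def by simp
    then have E0: "E = 0" using tort by simp
    have Eeq: "E = jmap brH t' (V1 + V2) + lam *\<^sub>R jmap brH Z1 (V1 + r *\<^sub>R V2)"
      unfolding E_def tt jmap_addZ[OF HB] jmap_scaleZ[OF HB] lin_j1[symmetric]
      by (simp add: algebra_simps)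
    have Uv: "V1 + r *\<^sub>R V2 \<in> vpart brH" using V1 V2 v1v v2v vS subspace_add subspace_scale by blast
    have "0 = E \<bullet> jmap brH Z1 (V1 + V2)" using E0 by simp
    also have "\<dots> = lam * ((V1 + r *\<^sub>R V2) \<bullet> (V1 + V2))"
      unfolding Eeq inner_add_left[of "jmap brH t' (V1 + V2)"] inner_scaleR_left cross[OF t'c Z1(1) t'o V] jpol[OF Z1(1) Uv V] Z11
      by simp
    also have "\<dots> = lam * (V1 \<bullet> V1 + r * (V2 \<bullet> V2))" using Upos[OF V1 V2] by simp
    finally have "lam * (V1 \<bullet> V1 + r * (V2 \<bullet> V2)) = 0" by simp
    moreover have "V1 \<bullet> V1 + r * (V2 \<bullet> V2) \<noteq> 0" using Uzero[OF V1 V2] Vnz by blast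
    ultimately have l0: "lam = 0" by simp
    then have "jmap brH t' (V1 + V2) = 0" using E0 Eeq by simp
    then have "(t' \<bullet> t') * ((V1 + V2) \<bullet> (V1 + V2)) = 0" using jpol[OF t'c V V] by simp
    then have "t' = 0" using Vnz by simp
    then have "t = 0" using tt l0 by simp
    then have "Z = brr (V1 + V2) Y0" using st Y0 by simp
    moreover have "brr X Y0 = brr (V1 + V2) Y0"
    proof -
      have "brr X Y0 = brr (X - c) Y0" using bcl[OF c(1), of "X - c" Y0] by simp
      then show ?thesis using VV by simp
    qed
    ultimately show "\<exists>Y. brr X Y = Z" by metis
  qed
  have p2: "r \<noteq> 1 \<longrightarrow> (\<forall>brH' :: 'b::euclidean_space \<Rightarrow> 'b \<Rightarrow> 'b.
        type_H brH' \<longrightarrow> \<not> (\<exists>f. lie_iso f brr brH'))"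
  proof (intro impI allI notI)
    fix brH' :: "'b \<Rightarrow> 'b \<Rightarrow> 'b"
    assume r1: "r \<noteq> 1" and H': "type_H brH'" and exf: "\<exists>f. lie_iso f brr brH'"
    then obtain f where lf: "linear f" and bf: "bij f" and hf: "\<And>x y. f (brr x y) = brH' (f x) (f y)"
      unfolding lie_iso_def by blast
    have HB': "bilinear brH'" using H' unfolding type_H_def two_step_nilpotent_def lie_algebra_def by blast
    have zS': "subspace (lie_center brH')" by (rule center_subspace[OF HB'])
    have vS': "subspace (vpart brH')" by (rule vpart_subspace)
    define g where "g = inv f"
    have fg: "\<And>x. f (g x) = x" unfolding g_def using bf by (simp add: bij_is_surj surj_f_inv_f)
    have gf: "\<And>x. g (f x) = x" unfolding g_def using bf by (simp add: bij_is_inj inv_f_f)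
    have lg: "linear g"
    proof (rule linearI)
      fix x y :: 'b and c :: real
      show "g (x + y) = g x + g y" by (metis fg gf linear_add[OF lf])
      show "g (c *\<^sub>R x) = c *\<^sub>R g x" by (metis fg gf linear_scale[OF lf])
    qed
    have f0: "f 0 = 0" using lf linear_0 by blast
    have g0: "g 0 = 0" using lg linear_0 by blast
    have fz: "\<And>U. U \<in> lie_center brH \<Longrightarrow> f U \<in> lie_center brH'"
    proof -
      fix U assume U: "U \<in> lie_center brH"
      have "brH' (f U) y = 0" for y
      proof -
        have "brH' (f U) y = brH' (f U) (f (g y))" by (simp add: fg)
        also have "\<dots> = f (brr U (g y))" by (simp add: hf)
        also have "\<dots> = 0" using brr_central U f0 by simp
        finally show ?thesis .
      qed
      then show "f U \<in> lie_center brH'" unfolding lie_center_def by blast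
    qed
    have fzi: "\<And>u. f u \<in> lie_center brH' \<Longrightarrow> u \<in> lie_center brH"
    proof -
      fix u assume u: "f u \<in> lie_center brH'"
      have "brr u y = 0" for y
      proof -
        have "f (brr u y) = 0" using hf u unfolding lie_center_def by simp
        then show ?thesis by (metis gf g0)
      qed
      then show "u \<in> lie_center brH" using ceq unfolding lie_center_def by blast
    qed
    have rep: "\<And>Zx. \<exists>Za \<in> lie_center brH'. \<forall>U \<in> lie_center brH. Za \<bullet> f U = Zx \<bullet> U"
    proof -
      fix Zx
      define Ya where "Ya = adjoint g Zx"
      have Ya: "x \<bullet> Ya = g x \<bullet> Zx" for x unfolding Ya_def using adjoint_works[OF lg] by blast
      obtain c where c: "c \<in> lie_center brH'" "Ya - c \<in> vpart brH'" using decomp[OF HB'] by blast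
      have "\<forall>U \<in> lie_center brH. c \<bullet> f U = Zx \<bullet> U"
      proof
        fix U assume U: "U \<in> lie_center brH"
        have "(Ya - c) \<bullet> f U = 0" using vpart_center_orth(1)[OF c(2) fz[OF U]] .
        then have "c \<bullet> f U = Ya \<bullet> f U" by (simp add: inner_diff_left)
        also have "\<dots> = Zx \<bullet> U" using Ya[of "f U"] gf by (simp add: inner_commute)
        finally show "c \<bullet> f U = Zx \<bullet> U" .
      qed
      then show "\<exists>Za \<in> lie_center brH'. \<forall>U \<in> lie_center brH. Za \<bullet> f U = Zx \<bullet> U" using c(1) by blast
    qed
    have jv': "\<And>Z V. jmap brH' Z V \<in> vpart brH'" using jmap_works[OF HB'] by blast
    have jin': "\<And>Z V W. W \<in> vpart brH' \<Longrightarrow> jmap brH' Z V \<bullet> W = Z \<bullet> brH' V W"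
      using jmap_works[OF HB'] by blast
    have keyA: "\<And>Za Zb Zx Zy X Y. \<forall>U\<in>lie_center brH. Za \<bullet> f U = Zx \<bullet> U \<Longrightarrow>
        \<forall>U\<in>lie_center brH. Zb \<bullet> f U = Zy \<bullet> U \<Longrightarrow>
        \<forall>W\<in>vpart brH. Zx \<bullet> brr Y W = Zy \<bullet> brr X W \<Longrightarrow> jmap brH' Za (f Y) = jmap brH' Zb (f X)"
    proof -
      fix Za Zb Zx Zy X Y
      assume a: "\<forall>U\<in>lie_center brH. Za \<bullet> f U = Zx \<bullet> U" and b: "\<forall>U\<in>lie_center brH. Zb \<bullet> f U = Zy \<bullet> U"
        and h: "\<forall>W\<in>vpart brH. Zx \<bullet> brr Y W = Zy \<bullet> brr X W"
      define d where "d = jmap brH' Za (f Y) - jmap brH' Zb (f X)"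
      have dv: "d \<in> vpart brH'" unfolding d_def using jv' vS' subspace_diff by blast
      have "d \<bullet> W' = 0" if W': "W' \<in> vpart brH'" for W'
      proof -
        obtain c where c: "c \<in> lie_center brH" "g W' - c \<in> vpart brH" using decomp[OF HB] by blast
        have e1: "brr Y (g W') = brr Y (g W' - c)" for Y using bcr[OF c(1), of Y "g W' - c"] by simp
        have "jmap brH' Za (f Y) \<bullet> W' = Za \<bullet> brH' (f Y) (f (g W'))" using jin'[OF W'] fg by simp
        also have "\<dots> = Zx \<bullet> brr Y (g W' - c)" using a bin e1 by (simp add: hf[symmetric])
        finally have 1: "jmap brH' Za (f Y) \<bullet> W' = Zx \<bullet> brr Y (g W' - c)" .
        have "jmap brH' Zb (f X) \<bullet> W' = Zb \<bullet> brH' (f X) (f (g W'))" using jin'[OF W'] fg by simp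
        also have "\<dots> = Zy \<bullet> brr X (g W' - c)" using b bin e1 by (simp add: hf[symmetric])
        finally have 2: "jmap brH' Zb (f X) \<bullet> W' = Zy \<bullet> brr X (g W' - c)" .
        show ?thesis unfolding d_def inner_diff_left 1 2 using h c(2) by simp
      qed
      then have "d \<bullet> d = 0" using dv by blast
      then show "jmap brH' Za (f Y) = jmap brH' Zb (f X)" unfolding d_def by simp
    qed
    obtain Za where Za: "Za \<in> lie_center brH'" "\<forall>U\<in>lie_center brH. Za \<bullet> f U = Z1 \<bullet> U" using rep by blast
    obtain Zb where Zb: "Zb \<in> lie_center brH'" "\<forall>U\<in>lie_center brH. Zb \<bullet> f U = Z2 \<bullet> U" using rep by blast
    define \<alpha> where "\<alpha> = Za \<bullet> Za"
    define \<beta> where "\<beta> = Zb \<bullet> Zb"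
    define \<gamma> where "\<gamma> = Za \<bullet> Zb"
    have Zanz: "Za \<noteq> 0" using Za(2) Z1(1) Z11 by force
    have apos: "\<alpha> > 0" unfolding \<alpha>_def using Zanz by simp
    have Z2o: "Z2 \<bullet> Z1 = 0" by (rule Z2(3))
    have B3: "\<And>X W. X \<in> vpart brH \<Longrightarrow> W \<in> vpart brH \<Longrightarrow> Z2 \<bullet> brr X W = jmap brH Z2 X \<bullet> W"
    proof -
      fix X W assume X: "X \<in> vpart brH" and W: "W \<in> vpart brH"
      obtain X1 X2 where X1: "X1 \<in> v1" and X2: "X2 \<in> v2" and XX: "X = X1 + X2" using vdec[OF X] by blast
      show "Z2 \<bullet> brr X W = jmap brH Z2 X \<bullet> W" using F[OF Z2(1) X1 X2 W] Z2o XX by simp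
    qed
    have keyS: "\<And>vs s X. subspace vs \<Longrightarrow> vs \<subseteq> vpart brH \<Longrightarrow>
        \<forall>V\<in>vs. jmap brH Z1 V \<in> vs \<and> jmap brH Z2 V \<in> vs \<Longrightarrow>
        \<forall>Y\<in>vs. \<forall>W\<in>vpart brH. Z1 \<bullet> brr Y W = s * (jmap brH Z1 Y \<bullet> W) \<Longrightarrow> s > 0 \<Longrightarrow>
        X \<in> vs \<Longrightarrow> X \<noteq> 0 \<Longrightarrow> \<beta> * s\<^sup>2 = \<alpha> * (Z2 \<bullet> Z2)"
    proof -
      fix vs s X
      assume vsS: "subspace vs" and vsv: "vs \<subseteq> vpart brH" and vsi: "\<forall>V\<in>vs. jmap brH Z1 V \<in> vs \<and> jmap brH Z2 V \<in> vs"
        and vsb: "\<forall>Y\<in>vs. \<forall>W\<in>vpart brH. Z1 \<bullet> brr Y W = s * (jmap brH Z1 Y \<bullet> W)" and sp: "s > 0"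
        and X: "X \<in> vs" and Xnz: "X \<noteq> 0"
      define K where "K V = - jmap brH Z1 (jmap brH Z2 V)" for V
      have Kin: "\<And>V. V \<in> vs \<Longrightarrow> (1/s) *\<^sub>R K V \<in> vs"
      proof -
        fix V assume V: "V \<in> vs"
        have "jmap brH Z2 V \<in> vs" using vsi V by blast
        then have "jmap brH Z1 (jmap brH Z2 V) \<in> vs" using vsi by blast
        then show "(1/s) *\<^sub>R K V \<in> vs" unfolding K_def
          by (intro subspace_scale[OF vsS] subspace_neg[OF vsS])
      qed
      have claimK: "\<And>V. V \<in> vs \<Longrightarrow> \<forall>W\<in>vpart brH. Z1 \<bullet> brr ((1/s) *\<^sub>R K V) W = Z2 \<bullet> brr V W"
      proof (intro ballI)
        fix V W assume V: "V \<in> vs" and W: "W \<in> vpart brH"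
        have Vv: "V \<in> vpart brH" using V vsv by blast
        have "Z1 \<bullet> brr ((1/s) *\<^sub>R K V) W = s * (jmap brH Z1 ((1/s) *\<^sub>R K V) \<bullet> W)"
          using vsb Kin[OF V] W by blast
        also have "\<dots> = jmap brH Z1 (K V) \<bullet> W" using sp by (simp add: jmap_scaleV[OF HB])
        also have "\<dots> = jmap brH Z2 V \<bullet> W"
          unfolding K_def jmap_negV[OF HB] jj[OF Z1(1) jv] Z11 by simp
        also have "\<dots> = Z2 \<bullet> brr V W" using B3[OF Vv W] by simp
        finally show "Z1 \<bullet> brr ((1/s) *\<^sub>R K V) W = Z2 \<bullet> brr V W" .
      qed
      define Y where "Y = (1/s) *\<^sub>R K X"
      define Y2 where "Y2 = (1/s) *\<^sub>R K Y"
      have Yvs: "Y \<in> vs" unfolding Y_def using Kin[OF X] .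
      have Y2vs: "Y2 \<in> vs" unfolding Y2_def using Kin[OF Yvs] .
      have eqA: "jmap brH' Za (f Y) = jmap brH' Zb (f X)"
        using keyA[OF Za(2) Zb(2) claimK[OF X]] unfolding Y_def .
      have eqB: "jmap brH' Za (f Y2) = jmap brH' Zb (f Y)"
        using keyA[OF Za(2) Zb(2) claimK[OF Yvs]] unfolding Y2_def .
      have Xv: "X \<in> vpart brH" using X vsv by blast
      have KK: "K (K X) = - (Z2 \<bullet> Z2) *\<^sub>R X"
      proof -
        have "K (K X) = jmap brH Z1 (jmap brH Z2 (jmap brH Z1 (jmap brH Z2 X)))"
          unfolding K_def by (simp add: jmap_negV[OF HB])
        also have "\<dots> = - jmap brH Z1 (jmap brH Z1 (jmap brH Z2 (jmap brH Z2 X)))"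
          using anti[OF Z2(1) Z1(1) Z2o jv, of "Z2" X] by (simp add: jmap_negV[OF HB])
        also have "\<dots> = - (Z2 \<bullet> Z2) *\<^sub>R X"
          using jj[OF Z2(1) Xv] jj[OF Z1(1) Xv] Z11 by (simp add: jmap_negV[OF HB] jmap_scaleV[OF HB])
        finally show ?thesis .
      qed
      have Klin: "K (c *\<^sub>R V) = c *\<^sub>R K V" for c V unfolding K_def by (simp add: jmap_scaleV[OF HB])
      have Y2eq: "Y2 = - ((Z2 \<bullet> Z2) / s\<^sup>2) *\<^sub>R X"
        unfolding Y2_def Y_def Klin KK by (simp add: power2_eq_square)
      have KX0: "K X \<bullet> X = 0"
      proof -
        have "K X \<bullet> X = - (jmap brH Z1 (jmap brH Z2 X) \<bullet> X)" unfolding K_def by simp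
        also have "\<dots> = jmap brH Z1 X \<bullet> jmap brH Z2 X" using skew[of "jmap brH Z2 X" X Z1, OF jv Xv] by (simp add: inner_commute)
        also have "\<dots> = 0" using cross[OF Z1(1) Z2(1) _ Xv] Z2o by (simp add: inner_commute)
        finally show ?thesis .
      qed
      define u where "u = \<alpha> *\<^sub>R Y2 + \<beta> *\<^sub>R X - (2 * \<gamma>) *\<^sub>R Y"
      have fu: "f u = \<alpha> *\<^sub>R f Y2 + \<beta> *\<^sub>R f X - (2 * \<gamma>) *\<^sub>R f Y"
        unfolding u_def using lf by (simp add: linear_add linear_diff linear_scale)
      have A1: "jmap brH' Za (jmap brH' Za (f Y2)) + \<alpha> *\<^sub>R f Y2 \<in> lie_center brH'"
        unfolding \<alpha>_def by (rule typeH_mod[OF H' Za(1)])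
      have A2: "jmap brH' Za (jmap brH' Zb (f Y)) + jmap brH' Zb (jmap brH' Za (f Y)) + (2 * \<gamma>) *\<^sub>R f Y \<in> lie_center brH'"
        unfolding \<gamma>_def by (rule typeH_anti_mod[OF H' Za(1) Zb(1)])
      have A3: "jmap brH' Zb (jmap brH' Zb (f X)) + \<beta> *\<^sub>R f X \<in> lie_center brH'"
        unfolding \<beta>_def by (rule typeH_mod[OF H' Zb(1)])
      have "f u = (jmap brH' Za (jmap brH' Za (f Y2)) + \<alpha> *\<^sub>R f Y2)
          - (jmap brH' Za (jmap brH' Zb (f Y)) + jmap brH' Zb (jmap brH' Za (f Y)) + (2 * \<gamma>) *\<^sub>R f Y)
          + (jmap brH' Zb (jmap brH' Zb (f X)) + \<beta> *\<^sub>R f X)"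
        unfolding fu eqA eqB by (simp add: algebra_simps)
      moreover have "(jmap brH' Za (jmap brH' Za (f Y2)) + \<alpha> *\<^sub>R f Y2)
          - (jmap brH' Za (jmap brH' Zb (f Y)) + jmap brH' Zb (jmap brH' Za (f Y)) + (2 * \<gamma>) *\<^sub>R f Y)
          + (jmap brH' Zb (jmap brH' Zb (f X)) + \<beta> *\<^sub>R f X) \<in> lie_center brH'"
        by (intro subspace_add[OF zS'] subspace_diff[OF zS'] A1 A2 A3)
      ultimately have "f u \<in> lie_center brH'" by simp
      then have uc: "u \<in> lie_center brH" by (rule fzi)
      have "Y2 \<in> vpart brH" "X \<in> vpart brH" "Y \<in> vpart brH" using Y2vs X Yvs vsv by blast+
      then have uv: "u \<in> vpart brH" unfolding u_def
        by (intro subspace_diff[OF vS] subspace_add[OF vS] subspace_scale[OF vS])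
      have u0: "u = 0" by (rule vpart_center_zero[OF uv uc])
      have "0 = u \<bullet> X" using u0 by simp
      also have "\<dots> = (\<beta> - \<alpha> * ((Z2 \<bullet> Z2) / s\<^sup>2)) * (X \<bullet> X)"
        unfolding u_def Y2eq Y_def using KX0
        by (simp add: inner_add_left inner_diff_left algebra_simps)
      finally have "\<beta> - \<alpha> * ((Z2 \<bullet> Z2) / s\<^sup>2) = 0" using Xnz by simp
      then show "\<beta> * s\<^sup>2 = \<alpha> * (Z2 \<bullet> Z2)" using sp by (simp add: field_simps)
    qed
    have B1: "\<forall>Y\<in>v1. \<forall>W\<in>vpart brH. Z1 \<bullet> brr Y W = 1 * (jmap brH Z1 Y \<bullet> W)"
    proof (intro ballI)
      fix Y W assume Y: "Y \<in> v1" and W: "W \<in> vpart brH"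
      show "Z1 \<bullet> brr Y W = 1 * (jmap brH Z1 Y \<bullet> W)"
        using F[OF Z1(1) Y subspace_0[OF v2(1)] W] by (simp add: jmap_zeroV[OF HB])
    qed
    have B2: "\<forall>Y\<in>v2. \<forall>W\<in>vpart brH. Z1 \<bullet> brr Y W = r * (jmap brH Z1 Y \<bullet> W)"
    proof (intro ballI)
      fix Y W assume Y: "Y \<in> v2" and W: "W \<in> vpart brH"
      have "Z1 \<bullet> brr (0 + Y) W = (jmap brH Z1 (0 + Y) + ((r - 1) * (Z1 \<bullet> Z1)) *\<^sub>R jmap brH Z1 Y) \<bullet> W"
        using F[OF Z1(1) subspace_0[OF v1(1)] Y W] .
      then show "Z1 \<bullet> brr Y W = r * (jmap brH Z1 Y \<bullet> W)" using Z11 by (simp add: algebra_simps)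
    qed
    obtain X2 where X2: "X2 \<in> v2" "X2 \<noteq> 0" using v2(3) subspace_0[OF v2(1)] by blast
    have e1: "\<beta> * 1\<^sup>2 = \<alpha> * (Z2 \<bullet> Z2)" using keyS[OF v1(1) v1(2) inv1 B1 _ V0] by simp
    have e2: "\<beta> * r\<^sup>2 = \<alpha> * (Z2 \<bullet> Z2)" using keyS[OF v2(1) v2(2) inv2 B2 r X2] .
    have "\<alpha> * (Z2 \<bullet> Z2) > 0" using apos Z2(2) by simp
    then have "r\<^sup>2 = 1" using e1 e2 apos Z2(2) by simp
    then have "(r - 1) * (r + 1) = 0" by (simp add: algebra_simps power2_eq_square)
    then show False using r r1 by simp
  qed
  show ?thesis using ns p2 by blast
qed

end
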